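(* Let $N\ge1$ and let the parameter space $\Theta$ of the correlated Bernoulli random graph model be nondegenerate. Suppose $S:\mathcal{X}\to\mathbb{R}$ is an unbiased estimator of $g(\theta)$ and $S':\mathcal{X}\to\mathbb{R}$ is an unbiased estimator of $g'(\theta)$, where $g,g':\Theta\to\mathbb{R}$. Then for any $a,b\in\mathbb{R}$, $a\overline{S}+b\overline{S'}$ is the UMVU estimator of $ag(\theta)+bg'(\theta)$. Moreover, $a\overline{S}+b\overline{S'}$ is balanced, $\overline{S}\cdot\overline{S'}$ is balanced, and (if $\overline{S'}$ is nowhere zero) $\overline{S}/\overline{S'}$ is balanced.
   Context: Correlated Bernoulli random graph model: fix a positive integer $N$ and let $\mathcal{R}=\{(p_1,\dots,p_N,\varrho_1,\dots,\varrho_N): p_i,\varrho_i\in[0,1]\}$; a parameter space is any $\Theta\subseteq\mathcal{R}$. For $\theta\in\Theta$, the pairs $(X_i,Y_i)$, $i=1,\dots,N$, of $\{0,1\}$-valued random variables are independent, $X_i,Y_i$ are marginally Bernoulli$(p_i)$ with Pearson correlation $\varrho_i$. Sample space $\mathcal{X}=\{(x,y):x,y\in\{0,1\}^N\}$. Let $\mathcal{R}^o=\{(p_1,\dots,p_N,0,\dots,0):p_i\in\mathbb{R}\}$; $\Theta$ is nondegenerate if $\Theta\cap\mathcal{R}^o$ has an interior point relative to $\mathcal{R}^o$. The disagreement vector $\mathcal{H}:\mathcal{X}\to\{0,\star,1\}^N$ has $i$th component $1$ if $x_i=y_i=1$, $0$ if $x_i=y_i=0$, $\star$ if $x_i\neq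 y_i$; $\mathcal{X}_h=\mathcal{H}^{-1}(h)$. The balanced variant of a statistic $S$ is $\overline{S}(x,y)=\frac{1}{|\mathcal{X}_h|}\sum_{(x',y')\in\mathcal{X}_h}S(x',y')$ with $h=\mathcal{H}(x,y)$; $S$ is called balanced if $S=\overline{S}$, i.e. $S$ is constant on each $\mathcal{X}_h$. An estimator $S$ is unbiased for $g$ if $\mathbb{E}_\theta S=g(\theta)$ for all $\theta\in\Theta$; UMVU means unbiased with minimum variance among unbiased estimators for every $\theta\in\Theta$. *)

theory Defs
  imports Main "HOL-Analysis.Analysis"
begin

text \<open>Encoding: a sample (x,y) with x,y in {0,1}^N is a pair of functions nat => bool
  (True = 1) that vanish at indices i >= N. A parameter (p_1..p_N, rho_1..rho_N) is a pair
  of functions nat => real vanishing at indices i >= N.\<close>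

type_synonym sample = "(nat \<Rightarrow> bool) \<times> (nat \<Rightarrow> bool)"
type_synonym param = "(nat \<Rightarrow> real) \<times> (nat \<Rightarrow> real)"

definition sample_space :: "nat \<Rightarrow> sample set" where
  "sample_space N = {(x, y). \<forall>i\<ge>N. \<not> x i \<and> \<not> y i}"

definition param_space :: "nat \<Rightarrow> param set" where
  "param_space N = {(p, r). (\<forall>i<N. 0 \<le> p i \<and> p i \<le> 1 \<and> 0 \<le> r i \<and> r i \<le> 1)
                            \<and> (\<forall>i\<ge>N. p i = 0 \<and> r i = 0)}"

text \<open>Joint pmf of a pair of Bernoulli(p) variables with Pearson correlation r.\<close>
definition pair_prob :: "real \<Rightarrow> real \<Rightarrow> bool \<Rightarrow> bool \<Rightarrow> real" where
  "pair_prob p r a b =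
     (if a \<and> b then p\<^sup>2 + r * p * (1 - p)
      else if \<not> a \<and> \<not> b then (1 - p)\<^sup>2 + r * p * (1 - p)
      else p * (1 - p) * (1 - r))"

definition cb_prob :: "nat \<Rightarrow> param \<Rightarrow> sample \<Rightarrow> real" where
  "cb_prob N \<theta> z = (\<Prod>i<N. pair_prob (fst \<theta> i) (snd \<theta> i) (fst z i) (snd z i))"

definition expect :: "nat \<Rightarrow> param \<Rightarrow> (sample \<Rightarrow> real) \<Rightarrow> real" where
  "expect N \<theta> S = (\<Sum>z\<in>sample_space N. S z * cb_prob N \<theta> z)"

definition variance :: "nat \<Rightarrow> param \<Rightarrow> (sample \<Rightarrow> real) \<Rightarrow> real" where
  "variance N \<theta> S = expect N \<theta> (\<lambda>z. (S z - expect N \<theta> S)\<^sup>2)"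

definition unbiased :: "nat \<Rightarrow> param set \<Rightarrow> (sample \<Rightarrow> real) \<Rightarrow> (param \<Rightarrow> real) \<Rightarrow> bool" where
  "unbiased N \<Theta> S g = (\<forall>\<theta>\<in>\<Theta>. expect N \<theta> S = g \<theta>)"

definition umvu :: "nat \<Rightarrow> param set \<Rightarrow> (sample \<Rightarrow> real) \<Rightarrow> (param \<Rightarrow> real) \<Rightarrow> bool" where
  "umvu N \<Theta> S g = (unbiased N \<Theta> S g \<and>
     (\<forall>T. unbiased N \<Theta> T g \<longrightarrow> (\<forall>\<theta>\<in>\<Theta>. variance N \<theta> S \<le> variance N \<theta> T)))"

text \<open>Nondegeneracy: Theta \<inter> R^o has an interior point relative to R^o
  (R^o = {(p,0) : p in R^N}).\<close>
definition nondegenerate :: "nat \<Rightarrow> param set \<Rightarrow> bool" where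
  "nondegenerate N \<Theta> = (\<exists>p0 e. (\<forall>i\<ge>N. p0 i = 0) \<and> e > 0 \<and>
     (\<forall>p. (\<forall>i\<ge>N. p i = 0) \<and> (\<forall>i<N. \<bar>p i - p0 i\<bar> < e) \<longrightarrow> (p, \<lambda>_. 0) \<in> \<Theta>))"

text \<open>Disagreement vector: Some True = 1, Some False = 0, None = star.\<close>
definition disagreement :: "nat \<Rightarrow> sample \<Rightarrow> (nat \<Rightarrow> bool option)" where
  "disagreement N z = (\<lambda>i. if i < N then (if fst z i = snd z i then Some (fst z i) else None)
                          else Some False)"

definition fiber :: "nat \<Rightarrow> (nat \<Rightarrow> bool option) \<Rightarrow> sample set" where
  "fiber N h = {z \<in> sample_space N. disagreement N z = h}"

definition balanced_variant :: "nat \<Rightarrow> (sample \<Rightarrow> real) \<Rightarrow> sample \<Rightarrow> real" where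
  "balanced_variant N S z =
     (\<Sum>z'\<in>fiber N (disagreement N z). S z') / real (card (fiber N (disagreement N z)))"

definition balanced :: "nat \<Rightarrow> (sample \<Rightarrow> real) \<Rightarrow> bool" where
  "balanced N S = (\<forall>z\<in>sample_space N. S z = balanced_variant N S z)"

end

theory Submission imports Defs begin

definition upd :: "sample \<Rightarrow> nat \<Rightarrow> bool \<Rightarrow> bool \<Rightarrow> sample" where
  "upd z j a b = ((fst z)(j:=a), (snd z)(j:=b))"
definition swp :: "nat \<Rightarrow> sample \<Rightarrow> sample" where
  "swp j z = ((fst z)(j:= snd z j), (snd z)(j := fst z j))"
definition SI :: "nat set \<Rightarrow> sample set" where
  "SI I = {z. \<forall>i. i \<notin> I \<longrightarrow> \<not> fst z i \<and> \<not> snd z i}"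

lemma SI_empty: "SI {} = {((\<lambda>_. False), (\<lambda>_. False))}"
  by (auto simp: SI_def)

lemma SI_insert: "j \<notin> I \<Longrightarrow> SI (insert j I) = (\<lambda>(z,(a,b)). upd z j a b) ` (SI I \<times> UNIV)"
proof (intro equalityI subsetI)
  fix z assume j: "j \<notin> I" and z: "z \<in> SI (insert j I)"
  have "z = upd (upd z j False False) j (fst z j) (snd z j)"
    by (auto simp: upd_def)
  moreover have "upd z j False False \<in> SI I" using z by (auto simp: SI_def upd_def)
  ultimately show "z \<in> (\<lambda>(z,(a,b)). upd z j a b) ` (SI I \<times> UNIV)"
    by (intro image_eqI[where x="(upd z j False False, (fst z j, snd z j))"]) auto
qed (auto simp: SI_def upd_def)

lemma inj_upd: "j \<notin> I \<Longrightarrow> inj_on (\<lambda>(z,(a,b)). upd z j a b) (SI I \<times> UNIV)"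
  unfolding inj_on_def SI_def upd_def
  by (auto simp: fun_eq_iff)

lemma finite_SI: "finite I \<Longrightarrow> finite (SI I)"
proof (induction I rule: finite_induct)
  case empty thus ?case by (simp add: SI_empty)
next
  case (insert j I) thus ?case by (simp add: SI_insert)
qed

lemma sum_SI_insert:
  assumes "j \<notin> I" "finite I"
  shows "(\<Sum>z\<in>SI (insert j I). F z) =
    (\<Sum>z\<in>SI I. F (upd z j True True) + F (upd z j True False) + F (upd z j False True) + F (upd z j False False))"
proof -
  have "(\<Sum>z\<in>SI (insert j I). F z) = (\<Sum>w\<in>SI I \<times> UNIV. F ((\<lambda>(z,(a,b)). upd z j a b) w))"
    unfolding SI_insert[OF assms(1)] by (rule sum.reindex[OF inj_upd[OF assms(1)], unfolded comp_def])
  also have "\<dots> = (\<Sum>z\<in>SI I. \<Sum>ab\<in>UNIV. F ((\<lambda>(z,(a,b)). upd z j a b) (z,ab)))"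
    by (simp add: sum.cartesian_product split_def)
  also have "\<dots> = (\<Sum>z\<in>SI I. F (upd z j True True) + F (upd z j True False) + F (upd z j False True) + F (upd z j False False))"
    by (rule sum.cong) (auto simp: UNIV_bool UNIV_Times_UNIV[symmetric] sum.cartesian_product add_ac)
  finally show ?thesis .
qed

lemma quad_zero:
  fixes A B C c e :: real
  assumes e: "e > 0" and h: "\<And>t. \<bar>t - c\<bar> < e \<Longrightarrow> t\<^sup>2 * A + (1 - t)\<^sup>2 * B + t * (1 - t) * C = 0"
  shows "A = 0 \<and> B = 0 \<and> C = 0"
proof -
  define \<alpha> where "\<alpha> = A + B - C"
  define \<beta> where "\<beta> = C - 2 * B"
  have P: "\<alpha> * t\<^sup>2 + \<beta> * t + B = 0" if "\<bar>t - c\<bar> < e" for t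
    using h[OF that] unfolding \<alpha>_def \<beta>_def by (simp add: power2_eq_square algebra_simps)
  define t1 where "t1 = c + e/2"
  define t2 where "t2 = c - e/2"
  have p0: "\<alpha> * c\<^sup>2 + \<beta> * c + B = 0" using P[of c] e by simp
  have p1: "\<alpha> * t1\<^sup>2 + \<beta> * t1 + B = 0" using P[of t1] e by (simp add: t1_def)
  have p2: "\<alpha> * t2\<^sup>2 + \<beta> * t2 + B = 0" using P[of t2] e by (simp add: t2_def)
  have d1: "(t1 - c) * (\<alpha> * (t1 + c) + \<beta>) = 0"
    using p0 p1 by (simp add: power2_eq_square algebra_simps)
  have d2: "(t2 - c) * (\<alpha> * (t2 + c) + \<beta>) = 0"
    using p0 p2 by (simp add: power2_eq_square algebra_simps)
  have q1: "\<alpha> * (t1 + c) + \<beta> = 0" using d1 e by (simp add: t1_def)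
  have q2: "\<alpha> * (t2 + c) + \<beta> = 0" using d2 e by (simp add: t2_def)
  have r1: "\<alpha>*t1 + \<alpha>*c + \<beta> = 0" using q1 by (simp add: distrib_left)
  have r2: "\<alpha>*t2 + \<alpha>*c + \<beta> = 0" using q2 by (simp add: distrib_left)
  have "\<alpha> * t1 = \<alpha> * t2" using r1 r2 by linarith
  moreover have "t1 \<noteq> t2" using e by (simp add: t1_def t2_def)
  ultimately have a0: "\<alpha> = 0" by simp
  hence b0: "\<beta> = 0" using q1 by simp
  hence "B = 0" using p0 a0 by simp
  thus ?thesis using a0 b0 unfolding \<alpha>_def \<beta>_def by simp
qed

abbreviation qq where "qq p z i \<equiv> pair_prob (p i) 0 (fst z i) (snd z i)"

lemma upd_swp: "i \<noteq> j \<Longrightarrow> upd (swp i z) j a b = swp i (upd z j a b)"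
  by (auto simp: upd_def swp_def fun_eq_iff)
lemma upd_swp_same: "upd (swp j z) j a b = upd z j a b"
  by (auto simp: upd_def swp_def fun_eq_iff)
lemma swp_upd_same: "swp j (upd z j a b) = upd z j b a"
  by (auto simp: upd_def swp_def fun_eq_iff)

lemma completeness_SI:
  assumes "finite I"
  shows "(\<forall>j z. f (swp j z) = f z) \<Longrightarrow> e > 0 \<Longrightarrow>
    (\<forall>p. (\<forall>i\<in>I. \<bar>p i - p0 i\<bar> < e) \<longrightarrow> (\<Sum>z\<in>SI I. f z * (\<Prod>i\<in>I. qq p z i)) = 0)
    \<Longrightarrow> \<forall>z\<in>SI I. f z = 0"
  using assms
proof (induction I arbitrary: f rule: finite_induct)
  case empty
  then show ?case by (simp add: SI_empty)
next
  case (insert j I f)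
  define B where "B a b p = (\<Sum>z\<in>SI I. f (upd z j a b) * (\<Prod>i\<in>I. qq p z i))" for a b p
  have updI: "(\<Prod>i\<in>I. qq (p(j:=t)) (upd z j a b) i) = (\<Prod>i\<in>I. qq p z i)" for p t z a b
    using insert.hyps(2) by (intro prod.cong) (auto simp: upd_def)
  have updj: "qq (p(j:=t)) (upd z j a b) j = pair_prob t 0 a b" for p t z a b
    by (simp add: upd_def)
  have symm: "B True False p = B False True p" for p
    unfolding B_def by (intro sum.cong refl) (metis insert.prems(1) swp_upd_same)
  have Bz: "B a b p = 0" if p: "\<forall>i\<in>I. \<bar>p i - p0 i\<bar> < e" for a b p
  proof -
    have "t\<^sup>2 * B True True p + (1 - t)\<^sup>2 * B False False p + t * (1 - t) * (B True False p + B False True p) = 0"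
      if t: "\<bar>t - p0 j\<bar> < e" for t
    proof -
      have pp: "pair_prob t 0 True True = t\<^sup>2" "pair_prob t 0 False False = (1-t)\<^sup>2"
         "pair_prob t 0 True False = t * (1 - t)" "pair_prob t 0 False True = t * (1 - t)"
        by (simp_all add: pair_prob_def)
      have "\<forall>i\<in>insert j I. \<bar>(p(j:=t)) i - p0 i\<bar> < e" using p t by auto
      hence "0 = (\<Sum>z\<in>SI (insert j I). f z * (\<Prod>i\<in>insert j I. qq (p(j:=t)) z i))"
        using insert.prems(3) by simp
      also have "\<dots> = (\<Sum>z\<in>SI I.
            f (upd z j True True) * (pair_prob t 0 True True * (\<Prod>i\<in>I. qq p z i))
          + f (upd z j True False) * (pair_prob t 0 True False * (\<Prod>i\<in>I. qq p z i))
          + f (upd z j False True) * (pair_prob t 0 False True * (\<Prod>i\<in>I. qq p z i))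
          + f (upd z j False False) * (pair_prob t 0 False False * (\<Prod>i\<in>I. qq p z i)))"
        using insert.hyps by (simp add: sum_SI_insert updI updj del: fun_upd_apply)
      also have "\<dots> = (\<Sum>z\<in>SI I. t\<^sup>2 * (f (upd z j True True) * (\<Prod>i\<in>I. qq p z i))
          + (1-t)\<^sup>2 * (f (upd z j False False) * (\<Prod>i\<in>I. qq p z i))
          + t * (1 - t) * (f (upd z j True False) * (\<Prod>i\<in>I. qq p z i))
          + t * (1 - t) * (f (upd z j False True) * (\<Prod>i\<in>I. qq p z i)))"
        unfolding pp by (intro sum.cong refl) (simp add: algebra_simps)
      also have "\<dots> = t\<^sup>2 * B True True p + (1 - t)\<^sup>2 * B False False p + t * (1 - t) * B True False p + t * (1 - t) * B False True p"
        unfolding B_def sum.distrib sum_distrib_left ..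
      also have "\<dots> = t\<^sup>2 * B True True p + (1 - t)\<^sup>2 * B False False p + t * (1 - t) * (B True False p + B False True p)"
        by (simp add: algebra_simps)
      finally show ?thesis by simp
    qed
    from quad_zero[OF insert.prems(2) this] symm[of p]
    have "B True True p = 0" "B False False p = 0" "B True False p = 0" "B False True p = 0" by auto
    thus ?thesis by (cases a; cases b) auto
  qed
  have fz: "\<forall>z\<in>SI I. f (upd z j a b) = 0" for a b
  proof (rule insert.IH)
    show "\<forall>i z. f (upd (swp i z) j a b) = f (upd z j a b)"
      using insert.prems(1) by (metis upd_swp upd_swp_same)
  qed (use insert.prems(2) Bz[unfolded B_def] in auto)
  show ?case
  proof
    fix z assume z: "z \<in> SI (insert j I)"
    have "z = upd (upd z j False False) j (fst z j) (snd z j)"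
      by (auto simp: upd_def)
    moreover have "upd z j False False \<in> SI I" using z by (auto simp: SI_def upd_def)
    ultimately show "f z = 0" using fz by metis
  qed
qed

lemma SS_SI: "sample_space N = SI {..<N}"
  by (auto simp: sample_space_def SI_def not_less)

lemma finite_SS: "finite (sample_space N)"
  by (simp add: SS_SI finite_SI)

lemma pair_prob_eq:
  assumes "(if a = b then Some a else None) = (if a' = b' then Some a' else None)"
  shows "pair_prob p r a b = pair_prob p r a' b'"
  using assms by (cases a; cases b; cases a'; cases b') (auto simp: pair_prob_def)

lemma cb_dis:
  assumes "disagreement N z = disagreement N z'"
  shows "cb_prob N \<theta> z = cb_prob N \<theta> z'"
  unfolding cb_prob_def
proof (rule prod.cong[OF refl])
  fix i assume "i \<in> {..<N}"
  hence "disagreement N z i = disagreement N z' i" "i < N" using assms by auto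
  thus "pair_prob (fst \<theta> i) (snd \<theta> i) (fst z i) (snd z i) = pair_prob (fst \<theta> i) (snd \<theta> i) (fst z' i) (snd z' i)"
    by (intro pair_prob_eq) (simp add: disagreement_def)
qed

lemma bv_dis: "disagreement N z = disagreement N z' \<Longrightarrow> balanced_variant N S z = balanced_variant N S z'"
  by (simp add: balanced_variant_def)

lemma dis_swp: "disagreement N (swp j z) = disagreement N z"
  by (auto simp: disagreement_def swp_def fun_eq_iff)

lemma bv_const:
  assumes z: "z \<in> sample_space N"
    and c: "\<And>z'. z' \<in> sample_space N \<Longrightarrow> disagreement N z' = disagreement N z \<Longrightarrow> T z' = T z"
  shows "balanced_variant N T z = T z"
proof -
  let ?F = "fiber N (disagreement N z)"
  have fin: "finite ?F" using finite_SS by (simp add: fiber_def)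
  have "z \<in> ?F" using z by (simp add: fiber_def)
  hence ne: "card ?F \<noteq> 0" using fin by auto
  have "(\<Sum>z'\<in>?F. T z') = (\<Sum>z'\<in>?F. T z)" by (rule sum.cong) (auto simp: fiber_def c)
  thus ?thesis using ne by (simp add: balanced_variant_def)
qed

lemma key:
  assumes phi: "\<And>z z'. z \<in> sample_space N \<Longrightarrow> z' \<in> sample_space N \<Longrightarrow>
       disagreement N z = disagreement N z' \<Longrightarrow> \<phi> z = \<phi> z'"
  shows "(\<Sum>z\<in>sample_space N. balanced_variant N T z * \<phi> z) = (\<Sum>z\<in>sample_space N. T z * \<phi> z)"
proof -
  let ?SS = "sample_space N" and ?D = "disagreement N ` sample_space N"
  have grp: "(\<Sum>z\<in>?SS. F z) = (\<Sum>h\<in>?D. \<Sum>z\<in>fiber N h. F z)" for F :: "sample \<Rightarrow> real"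
    unfolding fiber_def using sum.group[OF finite_SS finite_imageI[OF finite_SS], where g="disagreement N" and h=F, symmetric]
    by simp
  have "(\<Sum>z\<in>fiber N h. balanced_variant N T z * \<phi> z) = (\<Sum>z\<in>fiber N h. T z * \<phi> z)" if h: "h \<in> ?D" for h
  proof -
    obtain z0 where z0: "z0 \<in> ?SS" "h = disagreement N z0" using h by auto
    have fin: "finite (fiber N h)" using finite_SS by (simp add: fiber_def)
    have "z0 \<in> fiber N h" using z0 by (simp add: fiber_def)
    hence ne: "card (fiber N h) \<noteq> 0" using fin by auto
    have "(\<Sum>z\<in>fiber N h. balanced_variant N T z * \<phi> z) = (\<Sum>z\<in>fiber N h. (\<Sum>z'\<in>fiber N h. T z') / card (fiber N h) * \<phi> z0)"
      by (rule sum.cong) (auto simp: fiber_def balanced_variant_def z0 intro!: arg_cong[where f="\<lambda>x. _ * x"] phi)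
    also have "\<dots> = (\<Sum>z'\<in>fiber N h. T z') * \<phi> z0" using ne by simp
    also have "\<dots> = (\<Sum>z\<in>fiber N h. T z * \<phi> z)" unfolding sum_distrib_right
      by (rule sum.cong) (auto simp: fiber_def z0 intro!: arg_cong[where f="\<lambda>x. _ * x"] phi)
    finally show ?thesis .
  qed
  thus ?thesis by (simp add: grp)
qed

lemma expect_bv: "expect N \<theta> (balanced_variant N T) = expect N \<theta> T"
  unfolding expect_def by (rule key) (rule cb_dis)

lemma expect_cong: "(\<And>z. z \<in> sample_space N \<Longrightarrow> F z = G z) \<Longrightarrow> expect N \<theta> F = expect N \<theta> G"
  unfolding expect_def by (rule sum.cong) auto

lemma variance_cong: "(\<And>z. z \<in> sample_space N \<Longrightarrow> F z = G z) \<Longrightarrow> variance N \<theta> F = variance N \<theta> G"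
  unfolding variance_def using expect_cong[of N F G \<theta>]
  by (intro expect_cong) auto

lemma cb_nonneg: "\<theta> \<in> param_space N \<Longrightarrow> cb_prob N \<theta> z \<ge> 0"
  unfolding cb_prob_def
proof (rule prod_nonneg)
  fix i assume "\<theta> \<in> param_space N" "i \<in> {..<N}"
  then obtain p r where th: "\<theta> = (p, r)" "0 \<le> p i" "p i \<le> 1" "0 \<le> r i" "r i \<le> 1"
    by (cases \<theta>) (auto simp: param_space_def)
  thus "0 \<le> pair_prob (fst \<theta> i) (snd \<theta> i) (fst z i) (snd z i)"
    by (auto simp: pair_prob_def)
qed

lemma RB:
  assumes th: "\<theta> \<in> param_space N"
  shows "variance N \<theta> (balanced_variant N T) \<le> variance N \<theta> T"
proof -
  let ?SS = "sample_space N"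
  let ?bv = "balanced_variant N T"
  let ?c = "cb_prob N \<theta>"
  define \<mu> where "\<mu> = expect N \<theta> T"
  have mu: "expect N \<theta> ?bv = \<mu>" by (simp add: expect_bv \<mu>_def)
  have cross: "(\<Sum>z\<in>?SS. ?bv z * ((?bv z - \<mu>) * ?c z)) = (\<Sum>z\<in>?SS. T z * ((?bv z - \<mu>) * ?c z))"
    by (rule key) (metis bv_dis cb_dis)
  have "variance N \<theta> T = (\<Sum>z\<in>?SS. (T z - ?bv z)\<^sup>2 * ?c z + (?bv z - \<mu>)\<^sup>2 * ?c z
        + 2 * (T z * ((?bv z - \<mu>) * ?c z) - ?bv z * ((?bv z - \<mu>) * ?c z)))"
    unfolding variance_def \<mu>_def[symmetric] unfolding expect_def
    by (rule sum.cong) (simp_all add: power2_eq_square algebra_simps)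
  also have "\<dots> = (\<Sum>z\<in>?SS. (T z - ?bv z)\<^sup>2 * ?c z) + (\<Sum>z\<in>?SS. (?bv z - \<mu>)\<^sup>2 * ?c z)
        + 2 * ((\<Sum>z\<in>?SS. T z * ((?bv z - \<mu>) * ?c z)) - (\<Sum>z\<in>?SS. ?bv z * ((?bv z - \<mu>) * ?c z)))"
    by (simp add: sum.distrib sum_subtractf sum_distrib_left)
  also have "\<dots> = (\<Sum>z\<in>?SS. (T z - ?bv z)\<^sup>2 * ?c z) + variance N \<theta> ?bv"
    using cross mu by (simp add: variance_def expect_def)
  also have "\<dots> \<ge> variance N \<theta> ?bv"
    using cb_nonneg[OF th] by (simp add: sum_nonneg)
  finally show ?thesis .
qed

lemma completeness:
  assumes nd: "nondegenerate N \<Theta>"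
    and f: "\<And>j z. f (swp j z) = f z"
    and E: "\<And>\<theta>. \<theta> \<in> \<Theta> \<Longrightarrow> expect N \<theta> f = 0"
  shows "\<forall>z\<in>sample_space N. f z = 0"
proof -
  obtain p0 e where p0: "\<forall>i\<ge>N. p0 i = 0" "e > 0"
    and box: "\<And>p. (\<forall>i\<ge>N. p i = 0) \<and> (\<forall>i<N. \<bar>p i - p0 i\<bar> < e) \<Longrightarrow> (p, \<lambda>_. 0) \<in> \<Theta>"
    using nd unfolding nondegenerate_def by blast
  have S0: "\<forall>p. (\<forall>i\<in>{..<N}. \<bar>p i - p0 i\<bar> < e) \<longrightarrow> (\<Sum>z\<in>SI {..<N}. f z * (\<Prod>i\<in>{..<N}. qq p z i)) = 0"
  proof (intro allI impI)
    fix p assume p: "\<forall>i\<in>{..<N}. \<bar>p i - p0 i\<bar> < e"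
    define p' where "p' i = (if i < N then p i else 0)" for i
    have "(p', \<lambda>_. 0) \<in> \<Theta>" using p by (intro box) (auto simp: p'_def)
    hence "0 = expect N (p', \<lambda>_. 0) f" using E by simp
    also have "\<dots> = (\<Sum>z\<in>SI {..<N}. f z * (\<Prod>i\<in>{..<N}. qq p z i))"
      unfolding expect_def cb_prob_def SS_SI
      by (intro sum.cong refl arg_cong[where f="\<lambda>x. _ * x"] prod.cong) (auto simp: p'_def)
    finally show "(\<Sum>z\<in>SI {..<N}. f z * (\<Prod>i\<in>{..<N}. qq p z i)) = 0" by simp
  qed
  have f': "\<forall>j z. f (swp j z) = f z" using f by simp
  have "\<forall>z\<in>SI {..<N}. f z = 0"
    by (rule completeness_SI[OF finite_lessThan f' p0(2) S0])
  thus ?thesis by (simp add: SS_SI)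
qed

lemma expect_diff: "expect N \<theta> (\<lambda>z. F z - G z) = expect N \<theta> F - expect N \<theta> G"
  unfolding expect_def by (simp add: sum_subtractf left_diff_distrib)

lemma expect_lin: "expect N \<theta> (\<lambda>z. a * F z + b * G z) = a * expect N \<theta> F + b * expect N \<theta> G"
  unfolding expect_def by (simp add: sum.distrib sum_distrib_left distrib_right mult.assoc)

lemma balanced_dis:
  assumes "\<And>z z'. disagreement N z = disagreement N z' \<Longrightarrow> F z = F z'"
  shows "balanced N F"
  unfolding balanced_def
proof
  fix z assume "z \<in> sample_space N"
  thus "F z = balanced_variant N F z" by (subst bv_const) (auto intro: assms)
qed

theorem corollary1:
  fixes N :: nat and \<Theta> :: "param set" and S S' :: "sample \<Rightarrow> real"
    and g g' :: "param \<Rightarrow> real" and a b :: real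
  assumes "N \<ge> 1"
    and "\<Theta> \<subseteq> param_space N"
    and "nondegenerate N \<Theta>"
    and "unbiased N \<Theta> S g"
    and "unbiased N \<Theta> S' g'"
  shows "umvu N \<Theta> (\<lambda>z. a * balanced_variant N S z + b * balanced_variant N S' z)
              (\<lambda>\<theta>. a * g \<theta> + b * g' \<theta>)
       \<and> balanced N (\<lambda>z. a * balanced_variant N S z + b * balanced_variant N S' z)
       \<and> balanced N (\<lambda>z. balanced_variant N S z * balanced_variant N S' z)
       \<and> ((\<forall>z\<in>sample_space N. balanced_variant N S' z \<noteq> 0) \<longrightarrow>
            balanced N (\<lambda>z. balanced_variant N S z / balanced_variant N S' z))"
proof -
  define U where "U z = a * balanced_variant N S z + b * balanced_variant N S' z" for z
  have dS: "disagreement N z = disagreement N z' \<Longrightarrow> balanced_variant N T z = balanced_variant N T z'" for z z' T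
    by (rule bv_dis)
  have unbU: "unbiased N \<Theta> U (\<lambda>\<theta>. a * g \<theta> + b * g' \<theta>)"
    using assms(4,5) unfolding unbiased_def U_def by (simp add: expect_lin expect_bv)
  have opt: "variance N \<theta> U \<le> variance N \<theta> T"
    if T: "unbiased N \<Theta> T (\<lambda>\<theta>. a * g \<theta> + b * g' \<theta>)" and th: "\<theta> \<in> \<Theta>" for T \<theta>
  proof -
    have "\<forall>z\<in>sample_space N. balanced_variant N T z - U z = 0"
    proof (rule completeness[OF assms(3)])
      show "balanced_variant N T (swp j z) - U (swp j z) = balanced_variant N T z - U z" for j z
        unfolding U_def using dS[OF dis_swp[of N j z]] by simp
      show "expect N \<theta>' (\<lambda>z. balanced_variant N T z - U z) = 0" if "\<theta>' \<in> \<Theta>" for \<theta>'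
        using that T unbU unfolding unbiased_def by (simp add: expect_diff expect_bv)
    qed
    hence "variance N \<theta> U = variance N \<theta> (balanced_variant N T)"
      by (intro variance_cong) auto
    also have "\<dots> \<le> variance N \<theta> T" using th assms(2) by (intro RB) auto
    finally show ?thesis .
  qed
  have "umvu N \<Theta> U (\<lambda>\<theta>. a * g \<theta> + b * g' \<theta>)"
    unfolding umvu_def using unbU opt by blast
  moreover have "balanced N U" unfolding U_def by (rule balanced_dis) (metis dS)
  moreover have "balanced N (\<lambda>z. balanced_variant N S z * balanced_variant N S' z)"
    by (rule balanced_dis) (metis dS)
  moreover have "balanced N (\<lambda>z. balanced_variant N S z / balanced_variant N S' z)"
    by (rule balanced_dis) (metis dS)
  ultimately show ?thesis unfolding U_def by blast
qed

end
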